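(* Let $T,b>0$, $\alpha\in(0,1)$, and let $s\in C[0,T]$ with $s(0)=b$ and $0<\dot s(t)\le M$ for all $t\in[0,T]$, for some $M>0$. Let $Q_{s,T}=\{(x,t):0<x<s(t),\ 0<t<T\}$ and let $\partial\Gamma_{s,T}=\partial\overline{Q_{s,T}}\setminus(\{T\}\times(0,s(T)))$ denote its parabolic boundary. Suppose $u$ satisfies $u_t-\partial_xD^\alpha u=f$ in $Q_{s,T}$, with $u\in C(\overline{Q_{s,T}})$, $u_t\in C(Q_{s,T})$, and for some $\beta\in(\alpha,1]$, for every $t\in(0,T)$ and every $0<\varepsilon<\omega<s(t)$, $u(\cdot,t)\in W^{2,\frac1{1-\beta}}(\varepsilon,\omega)$. Then: (1) if $f\le0$, then $\max_{\overline{Q_{s,T}}}u$ is attained on $\partial\Gamma_{s,T}$; (2) if $f\ge0$, then $\min_{\overline{Q_{s,T}}}u$ is attained on $\partial\Gamma_{s,T}$.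
   Context: For $\alpha\in(0,1)$ the Caputo derivative in $x$ is $D^{\alpha}u(x,t)=\frac{1}{\Gamma(1-\alpha)}\frac{\partial}{\partial x}\int_0^x(x-p)^{-\alpha}[u(p,t)-u(0,t)]\,dp$, and $\partial_xD^\alpha u$ is its $x$-derivative. *)

theory Defs
  imports "HOL-Analysis.Analysis"
begin

definition Qst :: "(real \<Rightarrow> real) \<Rightarrow> real \<Rightarrow> (real \<times> real) set" where
  "Qst s T = {(x,t). 0 < x \<and> x < s t \<and> 0 < t \<and> t < T}"

definition par_bdry :: "(real \<Rightarrow> real) \<Rightarrow> real \<Rightarrow> (real \<times> real) set" where
  "par_bdry s T = frontier (closure (Qst s T)) - {(x,T) | x. 0 < x \<and> x < s T}"

definition frac_int :: "real \<Rightarrow> (real \<Rightarrow> real \<Rightarrow> real) \<Rightarrow> real \<Rightarrow> real \<Rightarrow> real" where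
  "frac_int \<alpha> u t x = (LBINT p=0..x. (x - p) powr (- \<alpha>) * (u p t - u 0 t))"

definition caputo :: "real \<Rightarrow> (real \<Rightarrow> real \<Rightarrow> real) \<Rightarrow> real \<Rightarrow> real \<Rightarrow> real" where
  "caputo \<alpha> u x t = (1 / Gamma (1 - \<alpha>)) * deriv (frac_int \<alpha> u t) x"

definition Lp_on :: "ereal \<Rightarrow> real \<Rightarrow> real \<Rightarrow> (real \<Rightarrow> real) \<Rightarrow> bool" where
  "Lp_on p a b g \<longleftrightarrow> set_borel_measurable lborel {a..b} g \<and>
     (if p = \<infinity> then (\<exists>C. AE y in lborel. y \<in> {a..b} \<longrightarrow> \<bar>g y\<bar> \<le> C)
      else set_integrable lborel {a..b} (\<lambda>y. \<bar>g y\<bar> powr real_of_ereal p))"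

text \<open>Sobolev space W^{2,p}(a,b) (one dimension): g and g' are absolutely continuous
  (indefinite integrals of integrable functions) and g'' is in L^p.  Since the functions
  considered are continuous, membership is stated for g itself (its continuous representative).\<close>
definition W2p :: "ereal \<Rightarrow> real \<Rightarrow> real \<Rightarrow> (real \<Rightarrow> real) \<Rightarrow> bool" where
  "W2p p a b g \<longleftrightarrow> (\<exists>g1 g2.
     set_integrable lborel {a..b} g1 \<and> set_integrable lborel {a..b} g2 \<and>
     (\<forall>x\<in>{a..b}. g x = g a + (LBINT y=a..x. g1 y)) \<and>
     (\<forall>x\<in>{a..b}. g1 x = g1 a + (LBINT y=a..x. g2 y)) \<and>
     Lp_on p a b g2)"

end

theory Submission
  imports Defs
begin

lemma kern_has_integral:
  fixes a x \<alpha> :: real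
  assumes "a \<le> x" "0 < \<alpha>" "\<alpha> < 1"
  shows "((\<lambda>p. (x - p) powr (-\<alpha>)) has_integral (x - a) powr (1 - \<alpha>) / (1 - \<alpha>)) {a..x}"
proof -
  define G where "G = (\<lambda>p. - ((x - p) powr (1 - \<alpha>) / (1 - \<alpha>)))"
  have "((\<lambda>p. (x - p) powr (-\<alpha>)) has_integral (G x - G a)) {a..x}"
  proof (rule fundamental_theorem_of_calculus_interior[OF assms(1)])
    show "continuous_on {a..x} G" unfolding G_def using assms
      by (intro continuous_intros continuous_on_powr') auto
    fix p assume p: "p \<in> {a<..<x}"
    have "((\<lambda>p. (x - p) powr (1 - \<alpha>)) has_real_derivative (1 - \<alpha>) * (x - p) powr (1 - \<alpha> - 1) * (-1)) (at p)"
      using p by (intro DERIV_fun_powr[simplified] derivative_eq_intros) (auto simp: greaterThanLessThan_iff)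
    hence "(G has_real_derivative (x - p) powr (-\<alpha>)) (at p)"
      unfolding G_def using assms p by (auto intro!: derivative_eq_intros)
    thus "(G has_vector_derivative (x - p) powr (-\<alpha>)) (at p)"
      by (simp add: has_real_derivative_iff_has_vector_derivative)
  qed
  moreover have "G x - G a = (x - a) powr (1 - \<alpha>) / (1 - \<alpha>)" unfolding G_def by simp
  ultimately show ?thesis by simp
qed

lemma kern_lborel:
  fixes a x \<alpha> :: real
  assumes "a \<le> x" "0 < \<alpha>" "\<alpha> < 1"
  shows "set_integrable lborel {a..x} (\<lambda>p. (x - p) powr (-\<alpha>))"
    "(LINT p:{a..x}|lborel. (x - p) powr (-\<alpha>)) = (x - a) powr (1 - \<alpha>) / (1 - \<alpha>)"
proof -
  have hi: "((\<lambda>p. (x - p) powr (-\<alpha>)) has_integral (x - a) powr (1 - \<alpha>) / (1 - \<alpha>)) {a..x}"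
    by (rule kern_has_integral[OF assms])
  have L: "set_integrable lebesgue {a..x} (\<lambda>p. (x - p) powr (-\<alpha>))"
    using hi by (intro nonnegative_absolutely_integrable_1) (auto simp: integrable_on_def)
  have meas: "(\<lambda>p. indicator {a..x} p *\<^sub>R (x - p) powr (-\<alpha>)) \<in> borel_measurable lborel"
    by measurable
  show S: "set_integrable lborel {a..x} (\<lambda>p. (x - p) powr (-\<alpha>))"
    using L meas unfolding set_integrable_def
    by (simp add: integrable_completion)
  show "(LINT p:{a..x}|lborel. (x - p) powr (-\<alpha>)) = (x - a) powr (1 - \<alpha>) / (1 - \<alpha>)"
    using set_borel_integral_eq_integral(2)[OF S] hi by (simp add: integral_unique)
qed


lemma kern_mult_integrable:
  fixes a x \<alpha> :: real and \<phi> :: "real \<Rightarrow> real"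
  assumes "a \<le> x" "0 < \<alpha>" "\<alpha> < 1" "continuous_on {a..x} \<phi>"
  shows "set_integrable lborel {a..x} (\<lambda>p. (x - p) powr (-\<alpha>) * \<phi> p)"
proof -
  obtain B where B: "\<And>p. p \<in> {a..x} \<Longrightarrow> norm (\<phi> p) \<le> B"
    using compact_imp_bounded[OF compact_continuous_image[OF assms(4) compact_Icc]]
    unfolding bounded_iff by (metis image_eqI)
  have m1: "(\<lambda>p. indicator {a..x} p *\<^sub>R \<phi> p) \<in> borel_measurable borel"
    by (rule borel_measurable_continuous_on_indicator[OF _ assms(4)]) auto
  have m2: "(\<lambda>p::real. (x - p) powr (-\<alpha>)) \<in> borel_measurable borel" by measurable
  have "(\<lambda>p. indicator {a..x} p *\<^sub>R ((x - p) powr (-\<alpha>) * \<phi> p)) =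
        (\<lambda>p. (x - p) powr (-\<alpha>) * (indicator {a..x} p *\<^sub>R \<phi> p))"
    by (auto simp: indicator_def)
  hence m: "set_borel_measurable lborel {a..x} (\<lambda>p. (x - p) powr (-\<alpha>) * \<phi> p)"
    using m1 m2 unfolding set_borel_measurable_def by simp
  show ?thesis
  proof (rule set_integrable_bound[OF _ m])
    show "set_integrable lborel {a..x} (\<lambda>p. B * (x - p) powr (-\<alpha>))"
      using kern_lborel(1)[OF assms(1-3)] by simp
    show "AE p in lborel. p \<in> {a..x} \<longrightarrow> norm ((x - p) powr (-\<alpha>) * \<phi> p) \<le> norm (B * (x - p) powr (-\<alpha>))"
    proof (rule AE_I2, rule impI)
      fix p assume p: "p \<in> {a..x}"
      have "norm ((x - p) powr (-\<alpha>) * \<phi> p) = (x - p) powr (-\<alpha>) * norm (\<phi> p)"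
        by (simp add: abs_mult)
      also have "\<dots> \<le> (x - p) powr (-\<alpha>) * B" using B[OF p] by (intro mult_left_mono) auto
      also have "\<dots> \<le> norm (B * (x - p) powr (-\<alpha>))" by (simp add: abs_mult mult.commute mult_right_mono)
      finally show "norm ((x - p) powr (-\<alpha>) * \<phi> p) \<le> norm (B * (x - p) powr (-\<alpha>))" .
    qed
  qed
qed


lemma second_diff_mono:
  fixes f f' :: "real \<Rightarrow> real" and r h :: real
  assumes h: "h > 0" and cont: "continuous_on {r-2*h..r} f"
    and der: "\<And>t. r-2*h < t \<Longrightarrow> t < r \<Longrightarrow> (f has_real_derivative f' t) (at t)"
    and mono: "\<And>s t. r-2*h < s \<Longrightarrow> s \<le> t \<Longrightarrow> t < r \<Longrightarrow> f' s \<le> f' t"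
  shows "f r - 2 * f (r-h) + f (r-2*h) \<ge> 0"
proof -
  have c1: "continuous_on {r-2*h..r-h} f" by (rule continuous_on_subset[OF cont]) auto
  have c2: "continuous_on {r-h..r} f" by (rule continuous_on_subset[OF cont]) auto
  obtain l1 z1 where z1: "r-2*h < z1" "z1 < r-h" "DERIV f z1 :> l1" "f (r-h) - f (r-2*h) = (r-h-(r-2*h)) * l1"
    using MVT[of "r-2*h" "r-h" f, OF _ c1] h der by (force simp: real_differentiable_def)
  obtain l2 z2 where z2: "r-h < z2" "z2 < r" "DERIV f z2 :> l2" "f r - f (r-h) = (r-(r-h)) * l2"
    using MVT[of "r-h" r f, OF _ c2] h der by (force simp: real_differentiable_def)
  have "l1 = f' z1" using DERIV_unique[OF z1(3) der[of z1]] z1 h by auto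
  moreover have "l2 = f' z2" using DERIV_unique[OF z2(3) der[of z2]] z2 h by auto
  ultimately have "l1 \<le> l2" using mono[of z1 z2] z1 z2 by auto
  hence "h * l1 \<le> h * l2" using h by auto
  thus ?thesis using z1(4) z2(4) by (simp add: algebra_simps)
qed

lemma kern_convex:
  fixes r h \<alpha> :: real
  assumes "h > 0" "r > 2*h" "0 < \<alpha>"
  shows "r powr (-\<alpha>) - 2 * (r-h) powr (-\<alpha>) + (r-2*h) powr (-\<alpha>) \<ge> 0"
proof (rule second_diff_mono[where f' = "\<lambda>t. - \<alpha> * t powr (-\<alpha> - 1)"])
  show "continuous_on {r-2*h..r} (\<lambda>t. t powr (-\<alpha>))" using assms
    by (intro continuous_intros) auto
  fix t assume "r-2*h < t" "t < r"
  hence "t > 0" using assms by auto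
  thus "((\<lambda>t. t powr (-\<alpha>)) has_real_derivative - \<alpha> * t powr (-\<alpha> - 1)) (at t)"
    using has_real_derivative_powr[of t "-\<alpha>"] by simp
next
  fix s t assume "r-2*h < s" "s \<le> t" "t < r"
  hence "s > 0" using assms by auto
  hence "t powr (-\<alpha> - 1) \<le> s powr (-\<alpha> - 1)" using \<open>s \<le> t\<close> assms
    by (intro powr_mono2') auto
  thus "- \<alpha> * s powr (-\<alpha> - 1) \<le> - \<alpha> * t powr (-\<alpha> - 1)" using assms by auto
qed (use assms in auto)

lemma pow_concave:
  fixes r h \<alpha> :: real
  assumes "h > 0" "r \<ge> 2*h" "0 < \<alpha>" "\<alpha> < 1"
  shows "r powr (1-\<alpha>) - 2 * (r-h) powr (1-\<alpha>) + (r-2*h) powr (1-\<alpha>) \<le> 0"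
proof -
  have "(\<lambda>t. - (t powr (1-\<alpha>))) r - 2 * (\<lambda>t. - (t powr (1-\<alpha>))) (r-h) + (\<lambda>t. - (t powr (1-\<alpha>))) (r-2*h) \<ge> 0"
  proof (rule second_diff_mono[where f' = "\<lambda>t. - ((1-\<alpha>) * t powr (-\<alpha>))"])
    show "continuous_on {r-2*h..r} (\<lambda>t. - (t powr (1-\<alpha>)))" using assms
      by (intro continuous_intros continuous_on_powr') auto
    fix t assume "r-2*h < t" "t < r"
    hence "t > 0" using assms by auto
    thus "((\<lambda>t. - (t powr (1-\<alpha>))) has_real_derivative - ((1-\<alpha>) * t powr (-\<alpha>))) (at t)"
      using has_real_derivative_powr[of t "1-\<alpha>"] by (auto intro!: derivative_eq_intros)
  next
    fix s t assume "r-2*h < s" "s \<le> t" "t < r"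
    hence "s > 0" using assms by auto
    hence "t powr (-\<alpha>) \<le> s powr (-\<alpha>)" using \<open>s \<le> t\<close> assms
      by (intro powr_mono2') auto
    thus "- ((1-\<alpha>) * s powr (-\<alpha>)) \<le> - ((1-\<alpha>) * t powr (-\<alpha>))" using assms
      by (intro le_imp_neg_le mult_left_mono) auto
  qed (use assms in auto)
  thus ?thesis by simp
qed


lemma pointwise_bound:
  fixes g :: "real \<Rightarrow> real" and x0 h C \<alpha> \<beta> p :: real
  assumes "0 < \<alpha>" "h > 0" "2*h \<le> x0" "\<beta> > 0" "C \<ge> 0"
    and gneg: "\<And>p. p \<in> {0..x0} \<Longrightarrow> g p \<le> 0"
    and gb: "\<And>p. p \<in> {x0-2*h..x0} \<Longrightarrow> \<bar>g p\<bar> \<le> C * (x0-p) powr (1+\<beta>)"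
  shows "(indicator {0..x0} p * (x0 - p) powr (-\<alpha>) - 2 * (indicator {0..x0-h} p * (x0 - h - p) powr (-\<alpha>))
          + indicator {0..x0-2*h} p * (x0 - 2*h - p) powr (-\<alpha>)) * g p
         \<le> 2*C*(2*h) powr (1+\<beta>) * (indicator {x0-2*h..x0-h} p * (x0 - h - p) powr (-\<alpha>))"
    (is "?K * g p \<le> ?B")
proof -
  have B0: "?B \<ge> 0" using assms by (intro mult_nonneg_nonneg) auto
  consider "p < 0 \<or> p > x0" | "0 \<le> p \<and> p < x0-2*h" | "x0-2*h \<le> p \<and> p \<le> x0" by linarith
  then show ?thesis
  proof cases
    case 1
    hence "p \<notin> {0..x0}" "p \<notin> {0..x0-h}" "p \<notin> {0..x0-2*h}" using assms by auto
    hence "?K = 0" by simp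
    thus ?thesis using B0 by simp
  next
    case 2
    hence "p \<in> {0..x0}" "p \<in> {0..x0-h}" "p \<in> {0..x0-2*h}" using assms by auto
    hence K: "?K = (x0-p) powr (-\<alpha>) - 2 * ((x0-p)-h) powr (-\<alpha>) + ((x0-p)-2*h) powr (-\<alpha>)"
      by (simp add: diff_diff_eq add.commute)
    have "?K \<ge> 0" unfolding K using 2 assms by (intro kern_convex) auto
    moreover have "g p \<le> 0" using 2 assms by (intro gneg) auto
    ultimately have "?K * g p \<le> 0" by (simp add: mult_nonneg_nonpos)
    thus ?thesis using B0 by linarith
  next
    case 3
    have p0: "p \<in> {0..x0}" using 3 assms by auto
    have gp: "g p \<le> 0" using gneg[OF p0] .
    have t1: "indicator {0..x0} p * (x0 - p) powr (-\<alpha>) * g p \<le> 0"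
      using gp by (intro mult_nonneg_nonpos) auto
    have t2: "indicator {0..x0-2*h} p * (x0 - 2*h - p) powr (-\<alpha>) * g p \<le> 0"
      using gp by (intro mult_nonneg_nonpos) auto
    have t3: "- 2 * (indicator {0..x0-h} p * (x0 - h - p) powr (-\<alpha>)) * g p \<le> ?B"
    proof (cases "p \<le> x0 - h")
      case True
      have "p \<in> {0..x0-h}" "p \<in> {x0-2*h..x0-h}" using True 3 assms by auto
      hence ind: "indicator {0..x0-h} p = (1::real)" "indicator {x0-2*h..x0-h} p = (1::real)"
        by simp_all
      have "\<bar>g p\<bar> \<le> C * (x0-p) powr (1+\<beta>)" using gb 3 by auto
      also have "\<dots> \<le> C * (2*h) powr (1+\<beta>)" using 3 assms
        by (intro mult_left_mono powr_mono2) simp_all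
      finally have ga: "- g p \<le> C * (2*h) powr (1+\<beta>)" by linarith
      have "- 2 * ((x0 - h - p) powr (-\<alpha>)) * g p = 2 * (x0 - h - p) powr (-\<alpha>) * (- g p)" by simp
      also have "\<dots> \<le> 2 * (x0 - h - p) powr (-\<alpha>) * (C * (2*h) powr (1+\<beta>))"
        using ga by (intro mult_left_mono) auto
      also have "\<dots> = ?B" unfolding ind by (simp only: mult_1 mult_ac)
      finally show ?thesis unfolding ind by (simp only: mult_1)
    next
      case False
      hence "p \<notin> {0..x0-h}" by auto
      hence "indicator {0..x0-h} p = (0::real)" by simp
      thus ?thesis using B0 by simp
    qed
    have "?K * g p = indicator {0..x0} p * (x0 - p) powr (-\<alpha>) * g p
        + indicator {0..x0-2*h} p * (x0 - 2*h - p) powr (-\<alpha>) * g p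
        + (- 2 * (indicator {0..x0-h} p * (x0 - h - p) powr (-\<alpha>)) * g p)"
      by (simp add: algebra_simps)
    thus ?thesis using t1 t2 t3 by linarith
  qed
qed


lemma second_diff_bound:
  fixes w :: "real \<Rightarrow> real" and F :: "real \<Rightarrow> real" and x0 h C \<alpha> \<beta> :: real
  assumes a: "0 < \<alpha>" "\<alpha> < 1" and h: "h > 0" "2*h \<le> x0" and b: "\<beta> > 0" and C: "C \<ge> 0"
    and cw: "continuous_on {0..x0} w"
    and wmax: "\<And>p. p \<in> {0..x0} \<Longrightarrow> w p \<le> w x0"
    and gb: "\<And>p. p \<in> {x0-2*h..x0} \<Longrightarrow> \<bar>w p - w x0\<bar> \<le> C * (x0-p) powr (1+\<beta>)"
    and F_def: "F = (\<lambda>x. LBINT p=0..x. (x - p) powr (-\<alpha>) * (w p - w 0))"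
  shows "F x0 - 2 * F (x0-h) + F (x0-2*h) \<le> 2*C*(2*h) powr (1+\<beta>) * (h powr (1-\<alpha>) / (1-\<alpha>))"
proof -
  define \<phi> where "\<phi> = (\<lambda>p. w p - w 0)"
  define c where "c = w x0 - w 0"
  define g where "g = (\<lambda>p. w p - w x0)"
  define Kk where "Kk = (\<lambda>x p. indicator {0..x} p * (x - p) powr (-\<alpha>) :: real)"
  define Bf where "Bf = (\<lambda>p. 2*C*(2*h) powr (1+\<beta>) * (indicator {x0-2*h..x0-h} p * (x0 - h - p) powr (-\<alpha>) :: real))"
  have cphi: "continuous_on {0..x} \<phi>" if "x \<le> x0" for x
    unfolding \<phi>_def using that by (intro continuous_intros continuous_on_subset[OF cw]) auto
  have Jint: "integrable lborel (\<lambda>p. Kk x p * \<phi> p)" if "0 \<le> x" "x \<le> x0" for x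
  proof -
    have "set_integrable lborel {0..x} (\<lambda>p. (x - p) powr (-\<alpha>) * \<phi> p)"
      by (rule kern_mult_integrable[OF that(1) a cphi[OF that(2)]])
    thus ?thesis unfolding set_integrable_def Kk_def by (simp add: mult.assoc)
  qed
  have FJ: "F x = integral\<^sup>L lborel (\<lambda>p. Kk x p * \<phi> p)" if "0 \<le> x" for x
  proof -
    have "F x = (LBINT p=ereal 0..ereal x. (x - p) powr (-\<alpha>) * (w p - w 0))"
      unfolding F_def by (simp add: zero_ereal_def)
    also have "\<dots> = (LBINT p:{0..x}. (x - p) powr (-\<alpha>) * (w p - w 0))"
      by (rule interval_integral_Icc) (use that in simp)
    also have "\<dots> = integral\<^sup>L lborel (\<lambda>p. Kk x p * \<phi> p)"
      by (simp add: set_lebesgue_integral_def Kk_def \<phi>_def mult.assoc)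
    finally show ?thesis .
  qed
  have Kint: "integrable lborel (Kk x)" "integral\<^sup>L lborel (Kk x) = x powr (1-\<alpha>) / (1-\<alpha>)" if "0 \<le> x" for x
    using kern_lborel[OF that a] unfolding set_integrable_def set_lebesgue_integral_def Kk_def
    by simp_all
  have Bint: "integrable lborel Bf" "integral\<^sup>L lborel Bf = 2*C*(2*h) powr (1+\<beta>) * (h powr (1-\<alpha>) / (1-\<alpha>))"
  proof -
    have le: "x0-2*h \<le> x0-h" using h by auto
    have "(x0 - h - (x0 - 2*h)) = h" by simp
    thus "integrable lborel Bf" "integral\<^sup>L lborel Bf = 2*C*(2*h) powr (1+\<beta>) * (h powr (1-\<alpha>) / (1-\<alpha>))"
      using kern_lborel[OF le a] unfolding set_integrable_def set_lebesgue_integral_def Bf_def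
      by simp_all
  qed
  have x1: "0 \<le> x0 - h" "0 \<le> x0 - 2*h" "0 \<le> x0" "x0 - h \<le> x0" "x0 - 2*h \<le> x0" using h by auto
  have pw: "Kk x0 p * \<phi> p - 2 * (Kk (x0-h) p * \<phi> p) + Kk (x0-2*h) p * \<phi> p
      \<le> Bf p + c * (Kk x0 p - 2 * Kk (x0-h) p + Kk (x0-2*h) p)" for p
  proof -
    have "(Kk x0 p - 2 * Kk (x0-h) p + Kk (x0-2*h) p) * g p \<le> Bf p"
      unfolding Kk_def Bf_def g_def
    proof (rule pointwise_bound[OF a(1) h b C])
      fix q :: real assume "q \<in> {0..x0}" thus "w q - w x0 \<le> 0" using wmax by simp
    next
      fix q :: real assume "q \<in> {x0-2*h..x0}" thus "\<bar>w q - w x0\<bar> \<le> C * (x0 - q) powr (1+\<beta>)" using gb by simp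
    qed
    moreover have "\<phi> p = g p + c" unfolding \<phi>_def g_def c_def by simp
    ultimately show ?thesis by (simp add: algebra_simps)
  qed
  have "F x0 - 2 * F (x0-h) + F (x0-2*h) =
        integral\<^sup>L lborel (\<lambda>p. Kk x0 p * \<phi> p - 2 * (Kk (x0-h) p * \<phi> p) + Kk (x0-2*h) p * \<phi> p)"
    using Jint[OF x1(3) order_refl] Jint[OF x1(1) x1(4)] Jint[OF x1(2) x1(5)]
    by (simp add: FJ[OF x1(1)] FJ[OF x1(2)] FJ[OF x1(3)])
  also have "\<dots> \<le> integral\<^sup>L lborel (\<lambda>p. Bf p + c * (Kk x0 p - 2 * Kk (x0-h) p + Kk (x0-2*h) p))"
    using Jint[OF x1(3) order_refl] Jint[OF x1(1) x1(4)] Jint[OF x1(2) x1(5)]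
      Kint(1)[OF x1(1)] Kint(1)[OF x1(2)] Kint(1)[OF x1(3)] Bint(1)
    by (intro integral_mono pw) auto
  also have "\<dots> = integral\<^sup>L lborel Bf + c * ((x0 powr (1-\<alpha>) - 2 * (x0-h) powr (1-\<alpha>) + (x0-2*h) powr (1-\<alpha>)) / (1-\<alpha>))"
    using Kint[OF x1(1)] Kint[OF x1(2)] Kint[OF x1(3)] Bint(1)
    by (simp add: diff_divide_distrib add_divide_distrib)
  also have "\<dots> \<le> integral\<^sup>L lborel Bf"
  proof -
    have "c \<ge> 0" unfolding c_def using wmax[of 0] x1 by auto
    moreover have "x0 powr (1-\<alpha>) - 2 * (x0-h) powr (1-\<alpha>) + (x0-2*h) powr (1-\<alpha>) \<le> 0"
      by (rule pow_concave[OF h(1) h(2) a])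
    ultimately have "c * ((x0 powr (1-\<alpha>) - 2 * (x0-h) powr (1-\<alpha>) + (x0-2*h) powr (1-\<alpha>)) / (1-\<alpha>)) \<le> 0"
      using a by (intro mult_nonneg_nonpos divide_nonpos_pos) auto
    thus ?thesis by linarith
  qed
  finally show ?thesis using Bint(2) by simp
qed


lemma second_deriv_nonpos:
  fixes F :: "real \<Rightarrow> real" and x0 a L K \<gamma> :: real
  assumes ax: "a < x0"
    and dif: "\<And>y. a < y \<Longrightarrow> y \<le> x0 \<Longrightarrow> F differentiable (at y)"
    and d2: "(deriv F has_real_derivative L) (at x0)"
    and g: "\<gamma> > 0"
    and bd: "\<And>h. 0 < h \<Longrightarrow> 2*h < x0 - a \<Longrightarrow> F x0 - 2 * F (x0-h) + F (x0-2*h) \<le> K * h powr (2+\<gamma>)"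
  shows "L \<le> 0"
proof (rule ccontr)
  assume "\<not> L \<le> 0" hence L: "L > 0" by simp
  define e where "e = L / 12"
  have e: "e > 0" using L e_def by simp
  define F' where "F' = deriv F"
  have DF: "(F has_real_derivative F' y) (at y)" if "a < y" "y \<le> x0" for y
    unfolding F'_def using dif[OF that] by (simp add: DERIV_deriv_iff_real_differentiable)
  have "((\<lambda>y. (F' y - F' x0) / (y - x0)) \<longlongrightarrow> L) (at x0)"
    using d2 unfolding F'_def has_field_derivative_iff .
  from tendstoD[OF this e] obtain d where d: "d > 0"
    and dd: "\<And>y. y \<noteq> x0 \<Longrightarrow> dist y x0 < d \<Longrightarrow> dist ((F' y - F' x0) / (y - x0)) L < e"
    unfolding eventually_at by auto
  have near: "\<bar>F' y - F' x0 - L * (y - x0)\<bar> \<le> e * \<bar>y - x0\<bar>" if "\<bar>y - x0\<bar> < d" for y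
  proof (cases "y = x0")
    case False
    hence nz: "y - x0 \<noteq> 0" by simp
    have "\<bar>(F' y - F' x0) / (y - x0) - L\<bar> < e" using dd[OF False] that by (simp add: dist_real_def)
    moreover have "(F' y - F' x0) / (y - x0) - L = (F' y - F' x0 - L * (y - x0)) / (y - x0)"
      using nz by (simp add: field_simps)
    ultimately have "\<bar>F' y - F' x0 - L * (y - x0)\<bar> / \<bar>y - x0\<bar> < e" by (simp add: abs_divide)
    thus ?thesis using nz by (simp add: divide_less_eq less_imp_le)
  qed simp
  define G where "G = (\<lambda>y. F y - F' x0 * (y - x0) - L / 2 * (y - x0)^2)"
  define G' where "G' = (\<lambda>y. F' y - F' x0 - L * (y - x0))"
  have DG: "(G has_real_derivative G' y) (at y)" if "a < y" "y \<le> x0" for y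
    unfolding G_def G'_def using DF[OF that] by (auto intro!: derivative_eq_intros)
  define m where "m = (if K \<le> 0 then 1 else (L / (4*K)) powr (1/\<gamma>))"
  have m: "m > 0" unfolding m_def using L by auto
  define h where "h = min (min (d/3) ((x0 - a)/3)) m"
  have h: "h > 0" "2*h < x0 - a" "2*h < d" "h \<le> m" unfolding h_def using d ax m by (simp_all add: min_def)
  have Kh: "K * h powr \<gamma> \<le> L / 4"
  proof (cases "K \<le> 0")
    case True
    have "K * h powr \<gamma> \<le> 0" using True by (intro mult_nonpos_nonneg) auto
    thus ?thesis using L by linarith
  next
    case False
    have "h powr \<gamma> \<le> m powr \<gamma>" using h g by (intro powr_mono2) auto
    also have "m powr \<gamma> = L / (4*K)" unfolding m_def using False L g by (simp add: powr_powr)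
    finally show ?thesis using False by (simp add: field_simps)
  qed
  have mvt: "\<bar>G x0 - G (x0 - t)\<bar> \<le> e * t^2" if t: "0 < t" "t \<le> 2*h" for t
  proof -
    obtain z where z: "x0 - t < z" "z < x0" "G x0 - G (x0 - t) = (x0 - (x0 - t)) * G' z"
      using MVT2[of "x0 - t" x0 G G'] t DG h by force
    have "\<bar>G' z\<bar> \<le> e * \<bar>z - x0\<bar>" unfolding G'_def using near[of z] z t h by auto
    also have "\<dots> \<le> e * t" using z e by (intro mult_left_mono) auto
    finally have "\<bar>G' z\<bar> \<le> e * t" .
    hence "\<bar>G x0 - G (x0 - t)\<bar> \<le> t * (e * t)" using z t by (simp add: abs_mult mult_left_mono)
    thus ?thesis by (simp add: power2_eq_square algebra_simps)
  qed
  have m1: "\<bar>G x0 - G (x0 - h)\<bar> \<le> e * h^2" using mvt[of h] h by auto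
  have m2: "\<bar>G x0 - G (x0 - 2*h)\<bar> \<le> 4 * (e * h^2)" using mvt[of "2*h"] h by (simp add: power2_eq_square)
  have comb: "F x0 - 2 * F (x0-h) + F (x0-2*h) = (G x0 - 2 * G (x0-h) + G (x0-2*h)) + L * h^2"
    unfolding G_def by (simp add: power2_eq_square algebra_simps)
  have "G x0 - 2 * G (x0-h) + G (x0-2*h) = 2 * (G x0 - G (x0-h)) - (G x0 - G (x0 - 2*h))" by simp
  moreover have "- (e * h^2) \<le> G x0 - G (x0 - h)" using m1 by (simp only: abs_le_iff) linarith
  moreover have "G x0 - G (x0 - 2*h) \<le> 4 * (e * h^2)" using m2 by (simp only: abs_le_iff)
  ultimately have "G x0 - 2 * G (x0-h) + G (x0-2*h) \<ge> - 6 * (e * h^2)" by linarith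
  hence "G x0 - 2 * G (x0-h) + G (x0-2*h) \<ge> - 6 * e * h^2" by simp
  hence "L * h^2 - 6 * e * h^2 \<le> K * h powr (2+\<gamma>)" using bd[OF h(1) h(2)] comb by linarith
  moreover have "h powr (2+\<gamma>) = h^2 * h powr \<gamma>" using h by (simp add: powr_add powr_realpow)
  ultimately have "L * h^2 - 6 * e * h^2 \<le> h^2 * (K * h powr \<gamma>)" by (simp add: algebra_simps)
  also have "\<dots> \<le> h^2 * (L/4)" using Kh by (intro mult_left_mono) auto
  finally have "h^2 * (L - 6*e) \<le> h^2 * (L/4)" by (simp add: algebra_simps)
  hence "L - 6*e \<le> L/4" using h by (simp add: mult_le_cancel_left)
  thus False using L e_def by simp
qed


lemma set_integral_Icc_bound:
  fixes f :: "real \<Rightarrow> real"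
  assumes "set_integrable lborel {u..v} f" "u \<le> v" "\<And>y. y \<in> {u..v} \<Longrightarrow> \<bar>f y\<bar> \<le> M"
  shows "\<bar>LINT y:{u..v}|lborel. f y\<bar> \<le> M * (v - u)"
proof -
  have "\<bar>LINT y:{u..v}|lborel. f y\<bar> \<le> (LINT y:{u..v}|lborel. \<bar>f y\<bar>)"
    using set_integral_norm_bound[OF assms(1)] by simp
  also have "\<dots> \<le> (LINT y:{u..v}|lborel. M)"
  proof (rule set_integral_mono)
    show "set_integrable lborel {u..v} (\<lambda>y. \<bar>f y\<bar>)" using assms(1) by (rule set_integrable_abs)
    show "set_integrable lborel {u..v} (\<lambda>y. M)" by (rule borel_integrable_atLeastAtMost') auto
  qed (use assms in auto)
  also have "\<dots> = M * (v - u)" using assms(2) by (simp add: set_integral_const)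
  finally show ?thesis .
qed

lemma lbint_diff:
  fixes h :: "real \<Rightarrow> real"
  assumes hi: "set_integrable lborel {a..b} h" and "a \<le> u" "u \<le> v" "v \<le> b"
  shows "(LBINT y=a..v. h y) - (LBINT y=a..u. h y) = (LINT y:{u..v}|lborel. h y)"
proof -
  have i1: "set_integrable lborel {a..<u} h" by (rule set_integrable_subset[OF hi]) (use assms in auto)
  have i2: "set_integrable lborel {u..v} h" by (rule set_integrable_subset[OF hi]) (use assms in auto)
  have "(LBINT y=a..v. h y) = (LINT y:{a..v}|lborel. h y)"
    using assms by (intro interval_integral_Icc) auto
  also have "{a..v} = {a..<u} \<union> {u..v}" using assms by auto
  also have "(LINT y:{a..<u} \<union> {u..v}|lborel. h y) = (LINT y:{a..<u}|lborel. h y) + (LINT y:{u..v}|lborel. h y)"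
    by (rule set_integral_Un[OF _ i1 i2]) auto
  also have "(LINT y:{a..<u}|lborel. h y) = (LBINT y=a..u. h y)"
    using assms by (intro interval_integral_Ico[symmetric]) auto
  finally show ?thesis by simp
qed


lemma young_pw:
  fixes z \<delta> q :: real
  assumes "z \<ge> 0" "\<delta> > 0" "q > 1"
  shows "z \<le> \<delta> powr (1-q) * z powr q + \<delta>"
proof (cases "z \<le> \<delta>")
  case True thus ?thesis by (smt (verit) mult_nonneg_nonneg powr_ge_zero)
next
  case False
  hence z: "z > \<delta>" by simp
  have "z powr q = z powr (q-1) * z" using z assms by (simp add: powr_diff)
  moreover have "\<delta> powr (q-1) \<le> z powr (q-1)" using z assms by (intro powr_mono2) auto
  ultimately have "\<delta> powr (q-1) * z \<le> z powr q" using assms by (simp add: mult_right_mono)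
  hence "\<delta> powr (1-q) * (\<delta> powr (q-1) * z) \<le> \<delta> powr (1-q) * z powr q"
    by (intro mult_left_mono) auto
  moreover have "\<delta> powr (1-q) * (\<delta> powr (q-1) * z) = z"
    using assms by (simp add: mult.assoc[symmetric] powr_add[symmetric])
  ultimately show ?thesis by (smt (verit) assms(2))
qed

lemma g2_bound:
  fixes g2 :: "real \<Rightarrow> real" and a b \<beta> :: real
  assumes b: "0 < \<beta>" "\<beta> \<le> 1" and ab: "a \<le> b"
    and gi: "set_integrable lborel {a..b} g2"
    and lp: "Lp_on (if \<beta> = 1 then \<infinity> else ereal (1 / (1 - \<beta>))) a b g2"
  shows "\<exists>C\<ge>0. \<forall>u v. a \<le> u \<longrightarrow> u \<le> v \<longrightarrow> v \<le> b \<longrightarrow>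
           (LINT y:{u..v}|lborel. \<bar>g2 y\<bar>) \<le> C * (v - u) powr \<beta>"
proof (cases "\<beta> = 1")
  case True
  then obtain C where C: "AE y in lborel. y \<in> {a..b} \<longrightarrow> \<bar>g2 y\<bar> \<le> C"
    using lp unfolding Lp_on_def by auto
  show ?thesis
  proof (intro exI[of _ "max C 0"] conjI allI impI)
    fix u v assume uv: "a \<le> u" "u \<le> v" "v \<le> b"
    have gi': "set_integrable lborel {u..v} g2" by (rule set_integrable_subset[OF gi]) (use uv in auto)
    have "(LINT y:{u..v}|lborel. \<bar>g2 y\<bar>) \<le> (LINT y:{u..v}|lborel. max C 0)"
    proof (rule set_integral_mono_AE)
      show "set_integrable lborel {u..v} (\<lambda>y. \<bar>g2 y\<bar>)" using gi' by (rule set_integrable_abs)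
      show "set_integrable lborel {u..v} (\<lambda>y. max C 0)" by (rule borel_integrable_atLeastAtMost') auto
      show "AE y\<in>{u..v} in lborel. \<bar>g2 y\<bar> \<le> max C 0"
        using C by eventually_elim (use uv in auto)
    qed
    also have "\<dots> = max C 0 * (v - u)" using uv by (simp add: set_integral_const)
    finally show "(LINT y:{u..v}|lborel. \<bar>g2 y\<bar>) \<le> max C 0 * (v - u) powr \<beta>"
      using True uv by simp
  qed auto
next
  case False
  define q where "q = 1 / (1 - \<beta>)"
  have b1: "\<beta> < 1" using False b by simp
  have q1: "q > 1" unfolding q_def using b b1 by (simp add: field_simps)
  have qi: "set_integrable lborel {a..b} (\<lambda>y. \<bar>g2 y\<bar> powr q)"
    using lp False unfolding Lp_on_def q_def by auto
  define A where "A = (LINT y:{a..b}|lborel. \<bar>g2 y\<bar> powr q)"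
  have A0: "A \<ge> 0" unfolding A_def set_lebesgue_integral_def by (intro Bochner_Integration.integral_nonneg) (auto simp: indicator_def)
  show ?thesis
  proof (intro exI[of _ "A + 1"] conjI allI impI)
    show "A + 1 \<ge> 0" using A0 by simp
    fix u v assume uv: "a \<le> u" "u \<le> v" "v \<le> b"
    have gi': "set_integrable lborel {u..v} g2" by (rule set_integrable_subset[OF gi]) (use uv in auto)
    have qi': "set_integrable lborel {u..v} (\<lambda>y. \<bar>g2 y\<bar> powr q)"
      by (rule set_integrable_subset[OF qi]) (use uv in auto)
    have Asub: "(LINT y:{u..v}|lborel. \<bar>g2 y\<bar> powr q) \<le> A"
      unfolding A_def set_lebesgue_integral_def
    proof (rule integral_mono)
      show "integrable lborel (\<lambda>x. indicat_real {u..v} x *\<^sub>R \<bar>g2 x\<bar> powr q)"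
        using qi' unfolding set_integrable_def .
      show "integrable lborel (\<lambda>x. indicat_real {a..b} x *\<^sub>R \<bar>g2 x\<bar> powr q)"
        using qi unfolding set_integrable_def .
      fix x show "indicat_real {u..v} x *\<^sub>R \<bar>g2 x\<bar> powr q \<le> indicat_real {a..b} x *\<^sub>R \<bar>g2 x\<bar> powr q"
        using uv by (auto simp: indicator_def)
    qed
    show "(LINT y:{u..v}|lborel. \<bar>g2 y\<bar>) \<le> (A + 1) * (v - u) powr \<beta>"
    proof (cases "u = v")
      case True
      have "\<bar>LINT y:{u..v}|lborel. \<bar>g2 y\<bar>\<bar> \<le> \<bar>g2 u\<bar> * (v - u)"
        using True by (intro set_integral_Icc_bound set_integrable_abs gi') auto
      thus ?thesis using True by simp
    next
      case False
      define t where "t = v - u"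
      have t: "t > 0" using False uv t_def by simp
      define \<delta> where "\<delta> = t powr (\<beta> - 1)"
      have \<delta>: "\<delta> > 0" unfolding \<delta>_def using t by simp
      have "(LINT y:{u..v}|lborel. \<bar>g2 y\<bar>) \<le> (LINT y:{u..v}|lborel. \<delta> powr (1-q) * \<bar>g2 y\<bar> powr q + \<delta>)"
      proof (rule set_integral_mono)
        show "set_integrable lborel {u..v} (\<lambda>y. \<bar>g2 y\<bar>)" using gi' by (rule set_integrable_abs)
        show "set_integrable lborel {u..v} (\<lambda>y. \<delta> powr (1-q) * \<bar>g2 y\<bar> powr q + \<delta>)"
          using qi' borel_integrable_atLeastAtMost'[of u v "\<lambda>_. \<delta>"] by (intro set_integral_add(1)) auto
        fix y show "\<bar>g2 y\<bar> \<le> \<delta> powr (1-q) * \<bar>g2 y\<bar> powr q + \<delta>"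
          using young_pw[OF _ \<delta> q1] by simp
      qed
      also have "\<dots> = \<delta> powr (1-q) * (LINT y:{u..v}|lborel. \<bar>g2 y\<bar> powr q) + \<delta> * t"
        using qi' borel_integrable_atLeastAtMost'[of u v "\<lambda>_. \<delta>"] uv unfolding t_def
        by (simp add: set_integral_add set_integral_const)
      also have "\<dots> \<le> \<delta> powr (1-q) * A + \<delta> * t"
        using Asub by (intro add_right_mono mult_left_mono) auto
      also have "\<delta> powr (1-q) = t powr \<beta>"
      proof -
        have "(\<beta> - 1) * (1 - q) = \<beta>" unfolding q_def using b1 by (simp add: field_simps)
        thus ?thesis unfolding \<delta>_def using t by (simp add: powr_powr)
      qed
      also have "\<delta> * t = t powr \<beta>"
      proof -
        have "t powr (\<beta> - 1) * t powr 1 = t powr (\<beta> - 1 + 1)" by (simp only: powr_add)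
        thus ?thesis unfolding \<delta>_def using t by simp
      qed
      finally show ?thesis unfolding t_def by (simp add: algebra_simps)
    qed
  qed
qed


lemma small_bound_zero:
  fixes z C m \<beta> :: real
  assumes "m > 0" "\<beta> > 0" "C \<ge> 0" "\<And>t. 0 < t \<Longrightarrow> t \<le> m \<Longrightarrow> \<bar>z\<bar> \<le> C * t powr \<beta>"
  shows "z = 0"
proof (rule ccontr)
  assume "z \<noteq> 0" hence e: "\<bar>z\<bar> > 0" by simp
  show False
  proof (cases "C = 0")
    case True thus False using assms(4)[of m] assms(1) e by simp
  next
    case False
    hence C: "C > 0" using assms by simp
    define t where "t = min m ((\<bar>z\<bar> / (2*C)) powr (1/\<beta>))"
    have t: "t > 0" "t \<le> m" unfolding t_def using assms e C by auto
    have "t powr \<beta> \<le> ((\<bar>z\<bar> / (2*C)) powr (1/\<beta>)) powr \<beta>"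
      using t assms by (intro powr_mono2) (auto simp: t_def)
    also have "\<dots> = \<bar>z\<bar> / (2*C)" using assms C e by (simp add: powr_powr)
    finally have "C * t powr \<beta> \<le> C * (\<bar>z\<bar> / (2*C))" using C by (intro mult_left_mono) auto
    also have "\<dots> = \<bar>z\<bar> / 2" using C by simp
    finally show False using assms(4)[OF t] e by simp
  qed
qed

lemma W2p_max_bound:
  fixes w :: "real \<Rightarrow> real" and a b x0 \<beta> :: real
  assumes b: "0 < \<beta>" "\<beta> \<le> 1" and x: "a < x0" "x0 < b"
    and W: "W2p (if \<beta> = 1 then \<infinity> else ereal (1 / (1 - \<beta>))) a b w"
    and wmax: "\<And>p. p \<in> {a..b} \<Longrightarrow> w p \<le> w x0"
  shows "\<exists>C\<ge>0. \<forall>p\<in>{a..x0}. \<bar>w p - w x0\<bar> \<le> C * (x0 - p) powr (1+\<beta>)"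
proof -
  obtain g1 g2 where i1: "set_integrable lborel {a..b} g1" and i2: "set_integrable lborel {a..b} g2"
    and r1: "\<forall>x\<in>{a..b}. w x = w a + (LBINT y=a..x. g1 y)"
    and r2: "\<forall>x\<in>{a..b}. g1 x = g1 a + (LBINT y=a..x. g2 y)"
    and lp: "Lp_on (if \<beta> = 1 then \<infinity> else ereal (1 / (1 - \<beta>))) a b g2"
    using W unfolding W2p_def by blast
  obtain C0 where C0: "C0 \<ge> 0" and hb: "\<And>u v. a \<le> u \<Longrightarrow> u \<le> v \<Longrightarrow> v \<le> b \<Longrightarrow>
           (LINT y:{u..v}|lborel. \<bar>g2 y\<bar>) \<le> C0 * (v - u) powr \<beta>"
  proof -
    have "a \<le> b" using x by simp
    from g2_bound[OF b this i2 lp] obtain C where C: "C \<ge> 0 \<and>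
      (\<forall>u v. a \<le> u \<longrightarrow> u \<le> v \<longrightarrow> v \<le> b \<longrightarrow> (LINT y:{u..v}|lborel. \<bar>g2 y\<bar>) \<le> C * (v - u) powr \<beta>)"
      by (rule exE)
    show ?thesis
    proof (rule that[of C])
      show "C \<ge> 0" using C by (rule conjunct1)
      fix u v assume "a \<le> u" "u \<le> v" "v \<le> b"
      thus "(LINT y:{u..v}|lborel. \<bar>g2 y\<bar>) \<le> C * (v - u) powr \<beta>" using C by simp
    qed
  qed
  have g1d: "\<bar>g1 v - g1 u\<bar> \<le> C0 * (v - u) powr \<beta>" if uv: "a \<le> u" "u \<le> v" "v \<le> b" for u v
  proof -
    have "g1 v = g1 a + (LBINT y=a..v. g2 y)" "g1 u = g1 a + (LBINT y=a..u. g2 y)"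
      using uv by (intro r2[rule_format]; simp)+
    hence "g1 v - g1 u = (LBINT y=a..v. g2 y) - (LBINT y=a..u. g2 y)" by linarith
    also have "\<dots> = (LINT y:{u..v}|lborel. g2 y)" by (rule lbint_diff[OF i2 uv])
    finally have "\<bar>g1 v - g1 u\<bar> = \<bar>LINT y:{u..v}|lborel. g2 y\<bar>" by simp
    also have "\<dots> \<le> (LINT y:{u..v}|lborel. \<bar>g2 y\<bar>)"
      using set_integral_norm_bound[OF set_integrable_subset[OF i2, of "{u..v}"]] uv by simp
    also have "\<dots> \<le> C0 * (v - u) powr \<beta>" by (rule hb[OF uv])
    finally show ?thesis .
  qed
  have wd: "\<bar>w v - w u - g1 r * (v - u)\<bar> \<le> C0 * (v - u) powr \<beta> * (v - u)"
    if uv: "a \<le> u" "u \<le> v" "v \<le> b" and r: "u \<le> r" "r \<le> v" for u v r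
  proof -
    have i1': "set_integrable lborel {u..v} g1" by (rule set_integrable_subset[OF i1]) (use uv in auto)
    have ic: "set_integrable lborel {u..v} (\<lambda>y. g1 r)" by (rule borel_integrable_atLeastAtMost') auto
    have "w v = w a + (LBINT y=a..v. g1 y)" "w u = w a + (LBINT y=a..u. g1 y)"
      using uv by (intro r1[rule_format]; simp)+
    hence "w v - w u = (LBINT y=a..v. g1 y) - (LBINT y=a..u. g1 y)" by linarith
    also have "\<dots> = (LINT y:{u..v}|lborel. g1 y)" by (rule lbint_diff[OF i1 uv])
    finally have "w v - w u - g1 r * (v - u) = (LINT y:{u..v}|lborel. g1 y - g1 r)"
      using uv i1' ic by (simp add: set_integral_diff(2) set_integral_const)
    also have "\<bar>\<dots>\<bar> \<le> C0 * (v - u) powr \<beta> * (v - u)"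
    proof (rule set_integral_Icc_bound)
      show "set_integrable lborel {u..v} (\<lambda>y. g1 y - g1 r)" using i1' ic by (rule set_integral_diff(1))
      fix y assume y: "y \<in> {u..v}"
      show "\<bar>g1 y - g1 r\<bar> \<le> C0 * (v - u) powr \<beta>"
      proof (cases "y \<le> r")
        case True
        have "\<bar>g1 r - g1 y\<bar> \<le> C0 * (r - y) powr \<beta>" using g1d[of y r] True y uv r by auto
        also have "\<dots> \<le> C0 * (v - u) powr \<beta>" using C0 True y r b by (intro mult_left_mono powr_mono2) auto
        finally show ?thesis by (simp add: abs_minus_commute)
      next
        case False
        have "\<bar>g1 y - g1 r\<bar> \<le> C0 * (y - r) powr \<beta>" using g1d[of r y] False y uv r by auto
        also have "\<dots> \<le> C0 * (v - u) powr \<beta>" using C0 False y r b by (intro mult_left_mono powr_mono2) auto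
        finally show ?thesis .
      qed
    qed (use uv in auto)
    finally show ?thesis .
  qed
  define m where "m = min (x0 - a) (b - x0)"
  have m: "m > 0" unfolding m_def using x by simp
  have g0: "g1 x0 = 0"
  proof (rule small_bound_zero[OF m b(1) C0])
    fix t assume t: "0 < t" "t \<le> m"
    have tm: "t \<le> x0 - a" "t \<le> b - x0" using t unfolding m_def by auto
    have R: "\<bar>w (x0+t) - w x0 - g1 x0 * ((x0+t) - x0)\<bar> \<le> C0 * ((x0+t) - x0) powr \<beta> * ((x0+t) - x0)"
      using t tm x by (intro wd) linarith+
    have Lf: "\<bar>w x0 - w (x0-t) - g1 x0 * (x0 - (x0-t))\<bar> \<le> C0 * (x0 - (x0-t)) powr \<beta> * (x0 - (x0-t))"
      using t tm x by (intro wd) linarith+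
    have w1: "w (x0+t) \<le> w x0" using t tm x by (intro wmax) simp
    have w2: "w (x0-t) \<le> w x0" using t tm x by (intro wmax) simp
    have "g1 x0 * t \<le> C0 * t powr \<beta> * t" using R w1 by (simp add: abs_le_iff)
    hence A: "g1 x0 \<le> C0 * t powr \<beta>" using t by simp
    have "- g1 x0 * t \<le> C0 * t powr \<beta> * t" using Lf w2 by (simp add: abs_le_iff)
    hence "(- g1 x0) * t \<le> (C0 * t powr \<beta>) * t" by simp
    hence B: "- g1 x0 \<le> C0 * t powr \<beta>" using mult_right_le_imp_le[of "- g1 x0" t "C0 * t powr \<beta>"] t(1) by linarith
    show "\<bar>g1 x0\<bar> \<le> C0 * t powr \<beta>" using A B by simp
  qed
  show ?thesis
  proof (intro exI[of _ C0] conjI ballI)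
    fix p assume p: "p \<in> {a..x0}"
    have "\<bar>w x0 - w p - g1 x0 * (x0 - p)\<bar> \<le> C0 * (x0 - p) powr \<beta> * (x0 - p)"
      using p x by (intro wd) auto
    also have "C0 * (x0 - p) powr \<beta> * (x0 - p) = C0 * (x0 - p) powr (1 + \<beta>)"
    proof (cases "p = x0")
      case False
      hence "x0 - p > 0" using p by simp
      hence "(x0 - p) powr (1 + \<beta>) = (x0 - p) powr 1 * (x0 - p) powr \<beta>" by (simp only: powr_add)
      thus ?thesis using \<open>x0 - p > 0\<close> by simp
    qed simp
    finally show "\<bar>w p - w x0\<bar> \<le> C0 * (x0 - p) powr (1 + \<beta>)" using g0 by (simp add: abs_minus_commute)
  qed (use C0 in auto)
qed


lemma frac_core:
  fixes w :: "real \<Rightarrow> real" and a b x0 \<alpha> \<beta> L :: real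
  assumes ab: "0 < \<alpha>" "\<alpha> < \<beta>" "\<beta> \<le> 1" and x: "0 < a" "a < x0" "x0 < b"
    and cw: "continuous_on {0..x0} w"
    and wmax: "\<And>p. p \<in> {0..b} \<Longrightarrow> w p \<le> w x0"
    and W: "W2p (if \<beta> = 1 then \<infinity> else ereal (1 / (1 - \<beta>))) a b w"
    and dif: "\<And>y. a < y \<Longrightarrow> y \<le> x0 \<Longrightarrow> (\<lambda>x. LBINT p=0..x. (x - p) powr (-\<alpha>) * (w p - w 0)) differentiable (at y)"
    and d2: "(deriv (\<lambda>x. LBINT p=0..x. (x - p) powr (-\<alpha>) * (w p - w 0)) has_real_derivative L) (at x0)"
  shows "L \<le> 0"
proof -
  define F where "F = (\<lambda>x. LBINT p=0..x. (x - p) powr (-\<alpha>) * (w p - w 0))"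
  have a1: "\<alpha> < 1" using ab by simp
  have b0: "\<beta> > 0" using ab by simp
  obtain C where C: "C \<ge> 0" and gb: "\<And>p. p \<in> {a..x0} \<Longrightarrow> \<bar>w p - w x0\<bar> \<le> C * (x0 - p) powr (1+\<beta>)"
    using W2p_max_bound[OF b0 ab(3) x(2) x(3) W] wmax x by force
  define K where "K = 2 * C * 2 powr (1+\<beta>) / (1-\<alpha>)"
  show ?thesis
  proof (rule second_deriv_nonpos[where F = F and a = a and \<gamma> = "\<beta> - \<alpha>" and K = K])
    show "a < x0" by fact
    show "\<And>y. a < y \<Longrightarrow> y \<le> x0 \<Longrightarrow> F differentiable (at y)" unfolding F_def by (rule dif)
    show "(deriv F has_real_derivative L) (at x0)" unfolding F_def by (rule d2)
    show "\<beta> - \<alpha> > 0" using ab by simp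
    fix h assume h: "0 < h" "2*h < x0 - a"
    have "F x0 - 2 * F (x0-h) + F (x0-2*h) \<le> 2*C*(2*h) powr (1+\<beta>) * (h powr (1-\<alpha>) / (1-\<alpha>))"
    proof (rule second_diff_bound[OF ab(1) a1 h(1) _ b0 C cw _ _ F_def])
      show "2*h \<le> x0" using h x by simp
      fix p assume "p \<in> {0..x0}" thus "w p \<le> w x0" using wmax x by simp
    next
      fix p assume "p \<in> {x0-2*h..x0}" thus "\<bar>w p - w x0\<bar> \<le> C * (x0 - p) powr (1+\<beta>)"
        using gb h by simp
    qed
    also have "2*C*(2*h) powr (1+\<beta>) * (h powr (1-\<alpha>) / (1-\<alpha>)) = K * h powr (2 + (\<beta> - \<alpha>))"
    proof -
      have "(2*h) powr (1+\<beta>) = 2 powr (1+\<beta>) * h powr (1+\<beta>)" using h by (simp add: powr_mult)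
      moreover have "h powr (1+\<beta>) * h powr (1-\<alpha>) = h powr (2 + (\<beta> - \<alpha>))"
        by (simp add: powr_add[symmetric])
      ultimately show ?thesis unfolding K_def by (simp add: field_simps)
    qed
    finally show "F x0 - 2 * F (x0-h) + F (x0-2*h) \<le> K * h powr (2 + (\<beta> - \<alpha>))" .
  qed
qed


lemma deriv_left_ge:
  fixes g :: "real \<Rightarrow> real"
  assumes d: "(g has_real_derivative D) (at t0)" and dl: "\<delta> > 0"
    and le: "\<And>t. t0 - \<delta> < t \<Longrightarrow> t < t0 \<Longrightarrow> e * (t0 - t) \<le> g t0 - g t"
  shows "e \<le> D"
proof -
  have "(g has_real_derivative D) (at t0 within {..<t0})" using d by (rule has_field_derivative_at_within)
  hence lim: "((\<lambda>y. (g y - g t0) / (y - t0)) \<longlongrightarrow> D) (at_left t0)"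
    unfolding has_field_derivative_iff by simp
  have ev: "eventually (\<lambda>y. y \<in> {t0 - \<delta><..<t0}) (at_left t0)"
    using dl by (intro eventually_at_left_real) simp
  have pw: "e \<le> (g y - g t0) / (y - t0)" if "y \<in> {t0 - \<delta><..<t0}" for y
  proof -
    have y: "t0 - \<delta> < y" "y < t0" using that by auto
    have "(g y - g t0) / (y - t0) = (g t0 - g y) / (t0 - y)"
      by (metis minus_diff_eq minus_divide_divide)
    moreover have "e \<le> (g t0 - g y) / (t0 - y)" using le[OF y] y by (simp add: pos_le_divide_eq)
    ultimately show ?thesis by simp
  qed
  have "eventually (\<lambda>y. e \<le> (g y - g t0) / (y - t0)) (at_left t0)"
    by (rule eventually_mono[OF ev pw])
  from tendsto_lowerbound[OF lim this] show ?thesis by simp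
qed

lemma Qst_closure_sub:
  fixes s :: "real \<Rightarrow> real" and T :: real
  assumes cs: "continuous_on {0..T} s"
  shows "closed {z :: real \<times> real. snd z \<in> {0..T} \<and> 0 \<le> fst z \<and> fst z \<le> s (snd z)}"
    and "closure (Qst s T) \<subseteq> {z. snd z \<in> {0..T} \<and> 0 \<le> fst z \<and> fst z \<le> s (snd z)}"
proof -
  let ?U = "UNIV \<times> {0..T} :: (real \<times> real) set"
  have cU: "closed ?U" by (intro closed_Times) auto
  have c1: "closed {z \<in> ?U. (\<lambda>z. 0) z \<le> fst z}"
    by (rule continuous_on_closed_Collect_le[OF continuous_on_const continuous_on_fst[OF continuous_on_id] cU])
  have cs': "continuous_on ?U (\<lambda>z. s (snd z))"
    by (rule continuous_on_compose2[OF cs continuous_on_snd[OF continuous_on_id]]) auto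
  have c2: "closed {z \<in> ?U. fst z \<le> s (snd z)}"
    by (rule continuous_on_closed_Collect_le[OF continuous_on_fst[OF continuous_on_id] cs' cU])
  have eq: "{z :: real \<times> real. snd z \<in> {0..T} \<and> 0 \<le> fst z \<and> fst z \<le> s (snd z)} =
        {z \<in> ?U. (\<lambda>z. 0) z \<le> fst z} \<inter> {z \<in> ?U. fst z \<le> s (snd z)}" by auto
  show cl: "closed {z :: real \<times> real. snd z \<in> {0..T} \<and> 0 \<le> fst z \<and> fst z \<le> s (snd z)}"
    unfolding eq using c1 c2 by (rule closed_Int)
  show "closure (Qst s T) \<subseteq> {z. snd z \<in> {0..T} \<and> 0 \<le> fst z \<and> fst z \<le> s (snd z)}"
    by (rule closure_minimal[OF _ cl]) (auto simp: Qst_def)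
qed

lemma left_in_closure:
  fixes s :: "real \<Rightarrow> real" and T t :: real
  assumes "0 < t" "t < T" "s t > 0"
  shows "(0, t) \<in> closure (Qst s T)"
  unfolding closure_approachable
proof (intro allI impI)
  fix e :: real assume e: "e > 0"
  define x where "x = min (e/2) (s t / 2)"
  have x: "0 < x" "x < s t" "x < e" unfolding x_def using e assms by auto
  show "\<exists>y\<in>Qst s T. dist y (0, t) < e"
  proof (rule bexI[of _ "(x, t)"])
    have "dist (x, t) (0, t) = x" using x by (simp add: dist_Pair_Pair dist_real_def)
    thus "dist (x, t) (0, t) < e" using x by simp
    show "(x, t) \<in> Qst s T" using x assms by (simp add: Qst_def)
  qed
qed


lemma interior_Qst_closure:
  fixes s :: "real \<Rightarrow> real" and T :: real
  assumes cs: "continuous_on {0..T} s"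
  shows "interior (closure (Qst s T)) \<subseteq> Qst s T"
proof
  fix z assume z: "z \<in> interior (closure (Qst s T))"
  obtain x t where zxt: "z = (x, t)" by (cases z)
  from z obtain e where e: "e > 0" "ball z e \<subseteq> closure (Qst s T)"
    unfolding mem_interior by blast
  have sub: "closure (Qst s T) \<subseteq> {z. snd z \<in> {0..T} \<and> 0 \<le> fst z \<and> fst z \<le> s (snd z)}"
    by (rule Qst_closure_sub(2)[OF cs])
  have d1: "(x + d, t) \<in> closure (Qst s T)" if "\<bar>d\<bar> < e" for d
  proof -
    have "dist (x, t) (x + d, t) = \<bar>d\<bar>" by (simp add: dist_Pair_Pair dist_real_def)
    thus ?thesis using e that zxt by auto
  qed
  have d2: "(x, t + d) \<in> closure (Qst s T)" if "\<bar>d\<bar> < e" for d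
  proof -
    have "dist (x, t) (x, t + d) = \<bar>d\<bar>" by (simp add: dist_Pair_Pair dist_real_def)
    thus ?thesis using e that zxt by auto
  qed
  have "(x + (-e/2), t) \<in> closure (Qst s T)" using e by (intro d1) simp
  hence A: "0 \<le> x - e/2" using sub by auto
  have "(x + e/2, t) \<in> closure (Qst s T)" using e by (intro d1) simp
  hence B: "x + e/2 \<le> s t" using sub by auto
  have "(x, t + (-e/2)) \<in> closure (Qst s T)" using e by (intro d2) simp
  hence C: "0 \<le> t - e/2" using sub by auto
  have "(x, t + e/2) \<in> closure (Qst s T)" using e by (intro d2) simp
  hence D: "t + e/2 \<le> T" using sub by auto
  show "z \<in> Qst s T" unfolding zxt Qst_def using A B C D e by auto
qed


lemma lemma8_max:
  fixes s :: "real \<Rightarrow> real" and u f :: "real \<Rightarrow> real \<Rightarrow> real"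
    and T b \<alpha> \<beta> :: real
  assumes T: "T > 0" and b: "b > 0" and a: "0 < \<alpha>" "\<alpha> < 1"
    and cs: "continuous_on {0..T} s" and s0: "s 0 = b"
    and cu: "continuous_on (closure (Qst s T)) (\<lambda>(x,t). u x t)"
    and ab: "\<alpha> < \<beta>" "\<beta> \<le> 1"
    and W: "\<forall>t\<in>{0<..<T}. \<forall>\<epsilon> \<omega>. 0 < \<epsilon> \<and> \<epsilon> < \<omega> \<and> \<omega> < s t \<longrightarrow>
           W2p (if \<beta> = 1 then \<infinity> else ereal (1 / (1 - \<beta>))) \<epsilon> \<omega> (\<lambda>x. u x t)"
    and H: "\<exists>ut. continuous_on (Qst s T) (\<lambda>(x,t). ut x t) \<and>
           (\<forall>(x,t)\<in>Qst s T.
              ((\<lambda>\<tau>. u x \<tau>) has_real_derivative ut x t) (at t) \<and>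
              (\<forall>y\<in>{0<..<s t}. frac_int \<alpha> u t differentiable (at y)) \<and>
              (\<lambda>y. caputo \<alpha> u y t) differentiable (at x) \<and>
              ut x t - deriv (\<lambda>y. caputo \<alpha> u y t) x = f x t)"
    and fneg: "\<forall>(x,t)\<in>Qst s T. f x t \<le> 0"
  shows "\<exists>p\<in>par_bdry s T. \<forall>q\<in>closure (Qst s T). case_prod u q \<le> case_prod u p"
proof -
  define Q where "Q = Qst s T"
  define Cl where "Cl = closure Q"
  obtain ut where Hut: "\<And>x t. (x, t) \<in> Q \<Longrightarrow>
              ((\<lambda>\<tau>. u x \<tau>) has_real_derivative ut x t) (at t) \<and>
              (\<forall>y\<in>{0<..<s t}. frac_int \<alpha> u t differentiable (at y)) \<and>
              (\<lambda>y. caputo \<alpha> u y t) differentiable (at x) \<and>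
              ut x t - deriv (\<lambda>y. caputo \<alpha> u y t) x = f x t"
    using H unfolding Q_def by fast
  have cu': "continuous_on Cl (case_prod u)" using cu unfolding Cl_def Q_def by simp
  have QCl: "Q \<subseteq> Cl" unfolding Cl_def by (rule closure_subset)
  have Sup: "\<And>x t. (x, t) \<in> Cl \<Longrightarrow> 0 \<le> t \<and> t \<le> T \<and> 0 \<le> x \<and> x \<le> s t"
    using Qst_closure_sub(2)[OF cs] unfolding Cl_def Q_def by auto
  have intQ: "interior Cl \<subseteq> Q" unfolding Cl_def Q_def by (rule interior_Qst_closure[OF cs])
  have Qmem: "(x, t) \<in> Q \<longleftrightarrow> 0 < x \<and> x < s t \<and> 0 < t \<and> t < T" for x t
    unfolding Q_def Qst_def by simp
  have left: "(0, t) \<in> Cl" if "0 < t" "t < T" "s t > 0" for t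
    unfolding Cl_def Q_def by (rule left_in_closure[of t T s, OF that])
  obtain Bs where Bs: "\<And>t. t \<in> {0..T} \<Longrightarrow> norm (s t) \<le> Bs"
    using compact_imp_bounded[OF compact_continuous_image[OF cs compact_Icc]]
    unfolding bounded_iff by (metis image_eqI)
  have "Q \<subseteq> {0..Bs} \<times> {0..T}"
  proof
    fix z assume "z \<in> Q"
    then obtain x t where z: "z = (x, t)" "0 < x" "x < s t" "0 < t" "t < T"
      using Qmem by (cases z) auto
    have "norm (s t) \<le> Bs" using z by (intro Bs) auto
    thus "z \<in> {0..Bs} \<times> {0..T}" using z by auto
  qed
  hence "bounded Q" by (rule bounded_subset[OF compact_imp_bounded[OF compact_Times[OF compact_Icc compact_Icc]]])
  hence cCl: "compact Cl" unfolding Cl_def by (simp add: compact_closure)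
  define Cc where "Cc = {z :: real \<times> real. snd z \<le> 0} \<union> {z. fst z \<le> 0} \<union> {z \<in> UNIV \<times> {0..T}. s (snd z) \<le> fst z}"
  have "closed Cc"
  proof -
    have c1: "closed {z \<in> UNIV. snd z \<le> (\<lambda>z::real\<times>real. 0::real) z}"
      by (rule continuous_on_closed_Collect_le[OF continuous_on_snd[OF continuous_on_id] continuous_on_const closed_UNIV])
    have c2: "closed {z \<in> UNIV. fst z \<le> (\<lambda>z::real\<times>real. 0::real) z}"
      by (rule continuous_on_closed_Collect_le[OF continuous_on_fst[OF continuous_on_id] continuous_on_const closed_UNIV])
    have cU: "closed (UNIV \<times> {0..T} :: (real \<times> real) set)" by (intro closed_Times) auto
    have cs': "continuous_on (UNIV \<times> {0..T}) (\<lambda>z::real\<times>real. s (snd z))"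
      by (rule continuous_on_compose2[OF cs continuous_on_snd[OF continuous_on_id]]) auto
    have c3: "closed {z \<in> UNIV \<times> {0..T}. s (snd z) \<le> fst z}"
      by (rule continuous_on_closed_Collect_le[OF cs' continuous_on_fst[OF continuous_on_id] cU])
    show ?thesis unfolding Cc_def using c1 c2 c3 by (intro closed_Un) auto
  qed
  define B1 where "B1 = Cl \<inter> Cc"
  have cB1: "compact B1" unfolding B1_def using cCl \<open>closed Cc\<close> by (rule compact_Int_closed)
  have QCc: "z \<notin> Cc" if "z \<in> Q" for z
    using that by (cases z) (auto simp: Cc_def Qmem)
  have B1pb: "B1 \<subseteq> par_bdry s T"
  proof
    fix z assume z: "z \<in> B1"
    hence "z \<in> Cl" "z \<in> Cc" unfolding B1_def by auto
    hence "z \<notin> Q" using QCc[of z] by blast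
    hence "z \<notin> interior Cl" using intQ by auto
    hence "z \<in> frontier Cl" using \<open>z \<in> Cl\<close> unfolding frontier_def Cl_def by simp
    moreover have "z \<notin> {(x,T) | x. 0 < x \<and> x < s T}" using \<open>z \<in> Cc\<close> T by (auto simp: Cc_def)
    ultimately show "z \<in> par_bdry s T" unfolding par_bdry_def Cl_def Q_def by simp
  qed
  obtain ts where ts: "0 < ts" "ts < T" "s ts > 0"
  proof -
    have "(0::real) \<in> {0..T}" using T by simp
    from cs[unfolded continuous_on_iff, rule_format, OF this b]
    obtain d where d: "d > 0" "\<And>t. t \<in> {0..T} \<Longrightarrow> dist t 0 < d \<Longrightarrow> dist (s t) (s 0) < b" by blast
    define t where "t = min (d/2) (T/2)"
    have t: "0 < t" "t < T" "t < d" unfolding t_def using d T by auto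
    have "dist (s t) b < b" using d(2)[of t] t s0 by (simp add: dist_real_def)
    hence "s t > 0" by (simp add: dist_real_def)
    thus ?thesis using that t by blast
  qed
  have "(0, ts) \<in> B1" unfolding B1_def Cc_def using left[OF ts] by auto
  hence B1ne: "B1 \<noteq> {}" by auto
  obtain pm where pm: "pm \<in> B1" and pmax: "\<And>y. y \<in> B1 \<Longrightarrow> case_prod u y \<le> case_prod u pm"
  proof -
    have "B1 \<subseteq> Cl" unfolding B1_def by auto
    from continuous_attains_sup[OF cB1 B1ne continuous_on_subset[OF cu' this]]
    show ?thesis using that by blast
  qed
  define Mx where "Mx = case_prod u pm"
  have main: "case_prod u q \<le> Mx" if q: "q \<in> Cl" for q
  proof (rule ccontr)
    assume "\<not> case_prod u q \<le> Mx"
    hence gt: "case_prod u q > Mx" by simp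
    obtain d where d: "d > 0" "\<And>x'. x' \<in> Cl \<Longrightarrow> dist x' q < d \<Longrightarrow> dist (case_prod u x') (case_prod u q) < case_prod u q - Mx"
      using cu' q gt unfolding continuous_on_iff by (metis diff_gt_0_iff_gt)
    obtain q' where q': "q' \<in> Q" "dist q' q < d"
      using q d(1) unfolding Cl_def closure_approachable by blast
    have uq': "case_prod u q' > Mx" using d(2)[OF _ q'(2)] q' QCl by (auto simp: dist_real_def)
    obtain x1 t1 where x1t1: "q' = (x1, t1)" by (cases q')
    have t1: "0 < t1" "t1 < T" using q' x1t1 Qmem by auto
    define e where "e = (case_prod u q' - Mx) / (2*T)"
    have e: "e > 0" unfolding e_def using uq' T by simp
    define S where "S = Cl \<inter> {z. snd z \<le> t1}"
    have cS: "compact S" unfolding S_def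
      by (rule compact_Int_closed[OF cCl]) (rule closed_Collect_le; intro continuous_intros)
    have q'S: "q' \<in> S" unfolding S_def using q' QCl x1t1 by auto
    define v where "v = (\<lambda>z. case_prod u z - e * snd z)"
    have cv: "continuous_on S v" unfolding v_def S_def
      by (intro continuous_intros continuous_on_subset[OF cu']) auto
    obtain z0 where z0: "z0 \<in> S" and zmax: "\<And>y. y \<in> S \<Longrightarrow> v y \<le> v z0"
      using continuous_attains_sup[OF cS _ cv] q'S by blast
    obtain x0 t0 where z0xt: "z0 = (x0, t0)" by (cases z0)
    have "e * t1 < e * T" using e t1 by simp
    also have "e * T = (case_prod u q' - Mx) / 2" unfolding e_def using T by simp
    finally have h: "e * t1 < (case_prod u q' - Mx) / 2" .
    have "e * t1 > 0" using e t1 by simp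
    hence "v q' > Mx" using h x1t1 unfolding v_def by (simp; linarith)
    hence vz0: "v z0 > Mx" using zmax[OF q'S] by simp
    have z0Cl: "(x0, t0) \<in> Cl" and t0t1: "t0 \<le> t1" using z0 z0xt unfolding S_def by auto
    have sup0: "0 \<le> t0" "t0 \<le> T" "0 \<le> x0" "x0 \<le> s t0" using Sup[OF z0Cl] by auto
    have "z0 \<notin> B1"
    proof
      assume "z0 \<in> B1"
      hence "case_prod u z0 \<le> Mx" using pmax unfolding Mx_def by blast
      moreover have "v z0 \<le> case_prod u z0" unfolding v_def z0xt using e sup0 by simp
      ultimately show False using vz0 by simp
    qed
    hence "z0 \<notin> Cc" using z0Cl z0xt unfolding B1_def by auto
    hence z0Q: "(x0, t0) \<in> Q" using sup0 t0t1 t1 z0xt unfolding Cc_def Qmem by auto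
    hence x0: "0 < x0" "x0 < s t0" "0 < t0" "t0 < T" using Qmem by auto
    have vle: "v (p, t) \<le> v (x0, t0)" if "(p, t) \<in> Cl" "t \<le> t0" for p t
      using zmax[of "(p, t)"] that t0t1 z0xt unfolding S_def by auto
    note Hx = Hut[OF z0Q]
    obtain dd where dd: "dd > 0" "\<And>t. t \<in> {0..T} \<Longrightarrow> dist t t0 < dd \<Longrightarrow> dist (s t) (s t0) < s t0 - x0"
    proof -
      have "t0 \<in> {0..T}" "s t0 - x0 > 0" using x0 by auto
      from cs[unfolded continuous_on_iff, rule_format, OF this]
      show ?thesis using that by blast
    qed
    have ut_ge: "e \<le> ut x0 t0"
    proof (rule deriv_left_ge[where \<delta> = "min dd t0"])
      show "((\<lambda>\<tau>. u x0 \<tau>) has_real_derivative ut x0 t0) (at t0)" using Hx by blast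
      show "min dd t0 > 0" using dd x0 by simp
      fix t assume t: "t0 - min dd t0 < t" "t < t0"
      have "dist (s t) (s t0) < s t0 - x0" using t x0 by (intro dd(2)) (auto simp: dist_real_def)
      hence "x0 < s t" by (simp add: dist_real_def)
      hence "(x0, t) \<in> Q" using t x0 Qmem by auto
      hence "v (x0, t) \<le> v (x0, t0)" using QCl t by (intro vle) auto
      thus "e * (t0 - t) \<le> u x0 t0 - u x0 t" unfolding v_def by (simp add: algebra_simps)
    qed
    define w where "w = (\<lambda>p. u p t0)"
    define bb where "bb = (x0 + s t0) / 2"
    have bb: "x0 < bb" "bb < s t0" unfolding bb_def using x0 by auto
    have wmax: "w p \<le> w x0" if p: "p \<in> {0..bb}" for p
    proof -
      have "(p, t0) \<in> Cl"
      proof (cases "p = 0")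
        case True thus ?thesis using left[of t0] x0 by auto
      next
        case False thus ?thesis using p bb x0 QCl Qmem by auto
      qed
      hence "v (p, t0) \<le> v (x0, t0)" by (intro vle) auto
      thus ?thesis unfolding v_def w_def by simp
    qed
    have cw: "continuous_on {0..x0} w"
    proof -
      have "continuous_on {0..x0} (\<lambda>p. case_prod u (p, t0))"
      proof (rule continuous_on_compose2[OF cu'])
        show "continuous_on {0..x0} (\<lambda>p. (p, t0))" by (intro continuous_intros)
        show "(\<lambda>p. (p, t0)) ` {0..x0} \<subseteq> Cl"
        proof
          fix z assume "z \<in> (\<lambda>p. (p, t0)) ` {0..x0}"
          then obtain p where p: "p \<in> {0..x0}" "z = (p, t0)" by auto
          show "z \<in> Cl"
          proof (cases "p = 0")
            case True thus ?thesis using left[of t0] x0 p by auto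
          next
            case False thus ?thesis using p x0 QCl Qmem by auto
          qed
        qed
      qed
      thus ?thesis unfolding w_def by simp
    qed
    have WW: "W2p (if \<beta> = 1 then \<infinity> else ereal (1 / (1 - \<beta>))) (x0/2) bb w"
      using W x0 bb unfolding w_def by auto
    have FI: "frac_int \<alpha> u t0 = (\<lambda>x. LBINT p=0..x. (x - p) powr (-\<alpha>) * (w p - w 0))"
      unfolding frac_int_def w_def by simp
    have difF: "(\<lambda>x. LBINT p=0..x. (x - p) powr (-\<alpha>) * (w p - w 0)) differentiable (at y)"
      if "x0/2 < y" "y \<le> x0" for y
      using Hx that x0 unfolding FI[symmetric] by auto
    define G where "G = Gamma (1 - \<alpha>)"
    have G: "G > 0" unfolding G_def using a by simp
    define D where "D = deriv (\<lambda>y. caputo \<alpha> u y t0) x0"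
    have dc: "((\<lambda>y. caputo \<alpha> u y t0) has_real_derivative D) (at x0)"
      unfolding D_def using Hx by (simp add: DERIV_deriv_iff_real_differentiable)
    have "deriv (frac_int \<alpha> u t0) = (\<lambda>y. G * caputo \<alpha> u y t0)"
      unfolding caputo_def G_def using G G_def by (auto simp: field_simps)
    hence "(deriv (\<lambda>x. LBINT p=0..x. (x - p) powr (-\<alpha>) * (w p - w 0)) has_real_derivative G * D) (at x0)"
      unfolding FI[symmetric] using dc by (auto intro!: derivative_eq_intros)
    hence "G * D \<le> 0"
      by (intro frac_core[OF a(1) ab _ _ bb(1) cw _ WW difF]) (use x0 wmax in auto)
    hence "D \<le> 0" using G by (simp add: mult_le_0_iff)
    hence "f x0 t0 \<ge> e" using Hx ut_ge unfolding D_def by auto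
    moreover have "f x0 t0 \<le> 0" using fneg z0Q unfolding Q_def by auto
    ultimately show False using e by simp
  qed
  show ?thesis
    using pm B1pb main unfolding Mx_def Cl_def Q_def by blast
qed


lemma W2p_neg:
  assumes "W2p p a b g"
  shows "W2p p a b (\<lambda>x. - g x)"
proof -
  obtain g1 g2 where i1: "set_integrable lborel {a..b} g1" and i2: "set_integrable lborel {a..b} g2"
    and r1: "\<forall>x\<in>{a..b}. g x = g a + (LBINT y=a..x. g1 y)"
    and r2: "\<forall>x\<in>{a..b}. g1 x = g1 a + (LBINT y=a..x. g2 y)"
    and lp: "Lp_on p a b g2"
    using assms unfolding W2p_def by blast
  have ni: "set_integrable lborel {a..b} (\<lambda>y. - h y)" if "set_integrable lborel {a..b} h" for h :: "real \<Rightarrow> real"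
    using that unfolding set_integrable_def by (simp add: integrable_minus)
  show ?thesis unfolding W2p_def
  proof (rule exI[of _ "\<lambda>y. - g1 y"], rule exI[of _ "\<lambda>y. - g2 y"], intro conjI ballI)
    show "set_integrable lborel {a..b} (\<lambda>y. - g1 y)" by (rule ni[OF i1])
    show "set_integrable lborel {a..b} (\<lambda>y. - g2 y)" by (rule ni[OF i2])
    fix x assume x: "x \<in> {a..b}"
    show "- g x = - g a + (LBINT y=a..x. - g1 y)"
      using r1[rule_format, OF x] by (simp add: interval_lebesgue_integral_uminus)
    show "- g1 x = - g1 a + (LBINT y=a..x. - g2 y)"
      using r2[rule_format, OF x] by (simp add: interval_lebesgue_integral_uminus)
  next
    have m: "set_borel_measurable lborel {a..b} g2" using lp unfolding Lp_on_def by simp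
    have m': "set_borel_measurable lborel {a..b} (\<lambda>y. - g2 y)"
      using m unfolding set_borel_measurable_def by (simp add: borel_measurable_uminus_eq)
    have "Lp_on p a b (\<lambda>y. - g2 y) = Lp_on p a b g2"
      unfolding Lp_on_def by (simp only: abs_minus_cancel m m')
    thus "Lp_on p a b (\<lambda>y. - g2 y)" using lp by simp
  qed
qed

lemma neg_case: "case_prod (\<lambda>x t. - u x t) q = - case_prod u q"
  by (cases q) simp

theorem lemma8:
  fixes s :: "real \<Rightarrow> real" and u f :: "real \<Rightarrow> real \<Rightarrow> real"
    and T b \<alpha> \<beta> M :: real
  assumes "T > 0" "b > 0" "0 < \<alpha>" "\<alpha> < 1" "M > 0"
    and "continuous_on {0..T} s" "s 0 = b"
    and "\<forall>t\<in>{0..T}. \<exists>s'. (s has_real_derivative s') (at t within {0..T}) \<and> 0 < s' \<and> s' \<le> M"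
    and "continuous_on (closure (Qst s T)) (\<lambda>(x,t). u x t)"
    and "\<alpha> < \<beta>" "\<beta> \<le> 1"
    and "\<forall>t\<in>{0<..<T}. \<forall>\<epsilon> \<omega>. 0 < \<epsilon> \<and> \<epsilon> < \<omega> \<and> \<omega> < s t \<longrightarrow>
           W2p (if \<beta> = 1 then \<infinity> else ereal (1 / (1 - \<beta>))) \<epsilon> \<omega> (\<lambda>x. u x t)"
    and "\<exists>ut. continuous_on (Qst s T) (\<lambda>(x,t). ut x t) \<and>
           (\<forall>(x,t)\<in>Qst s T.
              ((\<lambda>\<tau>. u x \<tau>) has_real_derivative ut x t) (at t) \<and>
              (\<forall>y\<in>{0<..<s t}. frac_int \<alpha> u t differentiable (at y)) \<and>
              (\<lambda>y. caputo \<alpha> u y t) differentiable (at x) \<and>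
              ut x t - deriv (\<lambda>y. caputo \<alpha> u y t) x = f x t)"
  shows "((\<forall>(x,t)\<in>Qst s T. f x t \<le> 0) \<longrightarrow>
            (\<exists>p\<in>par_bdry s T. \<forall>q\<in>closure (Qst s T). case_prod u q \<le> case_prod u p))
       \<and> ((\<forall>(x,t)\<in>Qst s T. f x t \<ge> 0) \<longrightarrow>
            (\<exists>p\<in>par_bdry s T. \<forall>q\<in>closure (Qst s T). case_prod u p \<le> case_prod u q))"
proof (intro conjI impI)
  assume "\<forall>(x,t)\<in>Qst s T. f x t \<le> 0"
  thus "\<exists>p\<in>par_bdry s T. \<forall>q\<in>closure (Qst s T). case_prod u q \<le> case_prod u p"
    by (rule lemma8_max[OF assms(1-4) assms(6,7,9,10,11,12,13)])
next
  assume fpos: "\<forall>(x,t)\<in>Qst s T. f x t \<ge> 0"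
  let ?u = "\<lambda>x t. - u x t"
  let ?f = "\<lambda>x t. - f x t"
  have cu: "continuous_on (closure (Qst s T)) (\<lambda>(x,t). ?u x t)"
  proof -
    have e: "(\<lambda>(x,t). ?u x t) = (\<lambda>z. - (\<lambda>(x,t). u x t) z)" by (auto simp: fun_eq_iff)
    show ?thesis unfolding e by (rule continuous_on_minus[OF assms(9)])
  qed
  have W: "\<forall>t\<in>{0<..<T}. \<forall>\<epsilon> \<omega>. 0 < \<epsilon> \<and> \<epsilon> < \<omega> \<and> \<omega> < s t \<longrightarrow>
           W2p (if \<beta> = 1 then \<infinity> else ereal (1 / (1 - \<beta>))) \<epsilon> \<omega> (\<lambda>x. ?u x t)"
    using assms(12) by (auto intro: W2p_neg)
  obtain ut where cut: "continuous_on (Qst s T) (\<lambda>(x,t). ut x t)" and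
    Hut: "\<And>x t. (x,t) \<in> Qst s T \<Longrightarrow>
              ((\<lambda>\<tau>. u x \<tau>) has_real_derivative ut x t) (at t) \<and>
              (\<forall>y\<in>{0<..<s t}. frac_int \<alpha> u t differentiable (at y)) \<and>
              (\<lambda>y. caputo \<alpha> u y t) differentiable (at x) \<and>
              ut x t - deriv (\<lambda>y. caputo \<alpha> u y t) x = f x t"
    using assms(13) by fast
  have FI: "frac_int \<alpha> ?u t = (\<lambda>y. - frac_int \<alpha> u t y)" for t
  proof
    fix y
    have "(\<lambda>p. (y - p) powr (-\<alpha>) * (?u p t - ?u 0 t)) = (\<lambda>p. - ((y - p) powr (-\<alpha>) * (u p t - u 0 t)))"
      by (auto simp: fun_eq_iff algebra_simps)
    thus "frac_int \<alpha> ?u t y = - frac_int \<alpha> u t y"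
      unfolding frac_int_def by (simp only: interval_lebesgue_integral_uminus)
  qed
  have H: "\<exists>ut. continuous_on (Qst s T) (\<lambda>(x,t). ut x t) \<and>
           (\<forall>(x,t)\<in>Qst s T.
              ((\<lambda>\<tau>. ?u x \<tau>) has_real_derivative ut x t) (at t) \<and>
              (\<forall>y\<in>{0<..<s t}. frac_int \<alpha> ?u t differentiable (at y)) \<and>
              (\<lambda>y. caputo \<alpha> ?u y t) differentiable (at x) \<and>
              ut x t - deriv (\<lambda>y. caputo \<alpha> ?u y t) x = ?f x t)"
  proof (intro exI[of _ "\<lambda>x t. - ut x t"] conjI ballI)
    have e: "(\<lambda>(x,t). - ut x t) = (\<lambda>z. - (\<lambda>(x,t). ut x t) z)" by (auto simp: fun_eq_iff)
    show "continuous_on (Qst s T) (\<lambda>(x,t). - ut x t)" unfolding e by (rule continuous_on_minus[OF cut])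
  next
    fix z assume z: "z \<in> Qst s T"
    obtain x t where zxt: "z = (x, t)" by (cases z)
    have xt: "(x, t) \<in> Qst s T" using z zxt by simp
    note Hx = Hut[OF xt]
    have xr: "0 < x" "x < s t" using xt unfolding Qst_def by auto
    have d1: "((\<lambda>\<tau>. ?u x \<tau>) has_real_derivative - ut x t) (at t)"
      using Hx by (auto intro: DERIV_minus)
    have d2: "\<forall>y\<in>{0<..<s t}. frac_int \<alpha> ?u t differentiable (at y)"
      using Hx unfolding FI by (auto intro: differentiable_minus)
    have cap: "caputo \<alpha> ?u y t = - caputo \<alpha> u y t" if y: "y \<in> {0<..<s t}" for y
    proof -
      have "(frac_int \<alpha> u t has_real_derivative deriv (frac_int \<alpha> u t) y) (at y)"
        using Hx y by (simp add: DERIV_deriv_iff_real_differentiable)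
      hence "((\<lambda>y. - frac_int \<alpha> u t y) has_real_derivative - deriv (frac_int \<alpha> u t) y) (at y)"
        by (rule DERIV_minus)
      hence "deriv (\<lambda>y. - frac_int \<alpha> u t y) y = - deriv (frac_int \<alpha> u t) y"
        by (rule DERIV_imp_deriv)
      thus ?thesis unfolding caputo_def FI by simp
    qed
    define Dc where "Dc = deriv (\<lambda>y. caputo \<alpha> u y t) x"
    have "((\<lambda>y. caputo \<alpha> u y t) has_real_derivative Dc) (at x)"
      unfolding Dc_def using Hx by (simp add: DERIV_deriv_iff_real_differentiable)
    hence "((\<lambda>y. - caputo \<alpha> u y t) has_real_derivative - Dc) (at x)" by (rule DERIV_minus)
    hence dc: "((\<lambda>y. caputo \<alpha> ?u y t) has_real_derivative - Dc) (at x)"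
      by (rule has_field_derivative_transform_within_open[where S = "{0<..<s t}"]) (use xr cap in auto)
    have d3: "(\<lambda>y. caputo \<alpha> ?u y t) differentiable (at x)"
      using dc by (auto simp: real_differentiable_def)
    have d4: "deriv (\<lambda>y. caputo \<alpha> ?u y t) x = - Dc" using dc by (rule DERIV_imp_deriv)
    have "- ut x t - deriv (\<lambda>y. caputo \<alpha> ?u y t) x = ?f x t"
      using Hx unfolding d4 Dc_def by simp
    thus "case z of (x, t) \<Rightarrow>
              ((\<lambda>\<tau>. ?u x \<tau>) has_real_derivative - ut x t) (at t) \<and>
              (\<forall>y\<in>{0<..<s t}. frac_int \<alpha> ?u t differentiable (at y)) \<and>
              (\<lambda>y. caputo \<alpha> ?u y t) differentiable (at x) \<and>
              - ut x t - deriv (\<lambda>y. caputo \<alpha> ?u y t) x = ?f x t"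
      using d1 d2 d3 zxt by simp
  qed
  have fneg: "\<forall>(x,t)\<in>Qst s T. ?f x t \<le> 0" using fpos by auto
  obtain p where p: "p \<in> par_bdry s T" and
    pm: "\<forall>q\<in>closure (Qst s T). case_prod ?u q \<le> case_prod ?u p"
    using lemma8_max[OF assms(1-4) assms(6,7) cu assms(10,11) W H fneg] by blast
  show "\<exists>p\<in>par_bdry s T. \<forall>q\<in>closure (Qst s T). case_prod u p \<le> case_prod u q"
    using p pm by (auto simp: neg_case)
qed


end
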